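(* Let $\phi\in C^3((0,\infty))$, $\eta=\phi'$ and $\hat\eta(r)=\eta(r)+2\eta(2r)$, and suppose there are constants $0<a_0<\tilde r_1<\tilde r_2<2a_0$ and $a_1>a_0$ such that: $\eta'(r)>0$ for $0<r<\tilde r_1$ and $\eta'(r)<0$ for $r>\tilde r_1$; $\eta''(r)<0$ for $0<r<\tilde r_2$ and $\eta''(r)>0$ for $r>\tilde r_2$; $\hat\eta(r)<0$ for $0<r<a_0$ and $\hat\eta(r)>0$ for $r>a_0$; $\hat\eta'(r)>0$ for $0<r<a_1$ and $\hat\eta'(r)<0$ for $r>a_1$. Let $N,K$ be positive integers with $K<N-1$. For $\mathbf r=(r_{-N},\dots,r_N)\in(0,\infty)^{2N+1}$ define $\hat{\mathbf\Psi}^L(\mathbf r)$ by $\hat\psi^L_j(\mathbf r)=\hat\eta(r_j)$, $j=-N,\dots,N$, and $\hat{\mathbf\Psi}^F(\mathbf r)$ by $\hat\psi^F_j(\mathbf r)=\eta(r_j)+2\eta(2r_j)$ for $-N\le j\le -K$ and for $K\le j\le N$, and $\hat\psi^F_j(\mathbf r)=\eta(r_j)+\eta(r_j+r_{j-1})+\eta(r_j+r_{j+1})+[2\eta(2r_K)-\eta(r_K+r_{K-1})-\eta(r_K+r_{K+1})]$ for $-K+1\le j\le K-1$. Fix $\mathbf\Phi\in\mathbb R^{2N+1}$ and set $\mathbf h(\mathbf r,t)=(1-t)[\hat{\mathbf\Psi}^L(\mathbf r)-\mathbf\Phi]+t[\hat{\mathbf\Psi}^F(\mathbf r)-\mathbf\Phi]$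 for $t\in[0,1]$. Let $0<r_L<r_U<a_1$ and $\Omega=(r_L,r_U)^{2N+1}$. Suppose that for every $i=-N,\dots,N$, every $t\in[0,1]$ and every $\mathbf r\in\partial\Omega$: $h_i(\mathbf r,t)>0$ if $r_i=r_U$, and $h_i(\mathbf r,t)<0$ if $r_i=r_L$. If the Jacobian matrix $D\hat{\mathbf\Psi}^F(\mathbf r)$ (with entries $D_j\hat\psi^F_i(\mathbf r)$) is strictly diagonally dominant with positive diagonal, i.e. $D_i\hat\psi^F_i(\mathbf r)>\sum_{j\ne i}|D_j\hat\psi^F_i(\mathbf r)|$ for all $i$, for all $\mathbf r\in\Omega$, then there exists a unique solution $\mathbf r\in\Omega$ of $\hat{\mathbf\Psi}^F(\mathbf r)=\mathbf\Phi$.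
   Context: $\hat{\mathbf\Psi}^L$ and $\hat{\mathbf\Psi}^F$ are the conjugate forces of the local and (symmetrized) force-based quasicontinuum approximations of a one-dimensional atomic chain with nearest and next-nearest neighbour pair interactions given by $\phi$. *)

theory Defs
  imports "HOL-Analysis.Analysis"
begin

definition idx :: "int \<Rightarrow> int set" where
  "idx N = {-N..N}"

definition C3_pos :: "(real \<Rightarrow> real) \<Rightarrow> bool" where
  "C3_pos f \<longleftrightarrow>
     (\<forall>k::nat. k < 3 \<longrightarrow> (\<forall>x>0. ((deriv ^^ k) f) differentiable (at x))) \<and>
     (\<forall>k::nat. k \<le> 3 \<longrightarrow> continuous_on {0<..} ((deriv ^^ k) f))"

definition eta_hat :: "(real \<Rightarrow> real) \<Rightarrow> real \<Rightarrow> real" where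
  "eta_hat \<eta> r = \<eta> r + 2 * \<eta> (2 * r)"

definition PsiL :: "(real \<Rightarrow> real) \<Rightarrow> (int \<Rightarrow> real) \<Rightarrow> int \<Rightarrow> real" where
  "PsiL \<eta> r j = eta_hat \<eta> (r j)"

definition PsiF :: "(real \<Rightarrow> real) \<Rightarrow> int \<Rightarrow> (int \<Rightarrow> real) \<Rightarrow> int \<Rightarrow> real" where
  "PsiF \<eta> K r j =
     (if -K + 1 \<le> j \<and> j \<le> K - 1 then
        \<eta> (r j) + \<eta> (r j + r (j - 1)) + \<eta> (r j + r (j + 1))
        + (2 * \<eta> (2 * r K) - \<eta> (r K + r (K - 1)) - \<eta> (r K + r (K + 1)))
      else \<eta> (r j) + 2 * \<eta> (2 * r j))"

definition hom :: "(real \<Rightarrow> real) \<Rightarrow> int \<Rightarrow> (int \<Rightarrow> real) \<Rightarrow> (int \<Rightarrow> real) \<Rightarrow> real \<Rightarrow> int \<Rightarrow> real" where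
  "hom \<eta> K \<Phi> r t i = (1 - t) * (PsiL \<eta> r i - \<Phi> i) + t * (PsiF \<eta> K r i - \<Phi> i)"

text \<open>Omega = (rL,rU)^{2N+1}, configurations extended by 0 outside the index range.\<close>
definition Omega :: "int \<Rightarrow> real \<Rightarrow> real \<Rightarrow> (int \<Rightarrow> real) set" where
  "Omega N rL rU = {r. (\<forall>j\<in>idx N. rL < r j \<and> r j < rU) \<and> (\<forall>j. j \<notin> idx N \<longrightarrow> r j = 0)}"

definition Omega_bdry :: "int \<Rightarrow> real \<Rightarrow> real \<Rightarrow> (int \<Rightarrow> real) set" where
  "Omega_bdry N rL rU = {r. (\<forall>j\<in>idx N. rL \<le> r j \<and> r j \<le> rU) \<and> (\<forall>j. j \<notin> idx N \<longrightarrow> r j = 0)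
      \<and> (\<exists>j\<in>idx N. r j = rL \<or> r j = rU)}"

definition pD :: "((int \<Rightarrow> real) \<Rightarrow> int \<Rightarrow> real) \<Rightarrow> (int \<Rightarrow> real) \<Rightarrow> int \<Rightarrow> int \<Rightarrow> real" where
  "pD F r i j = deriv (\<lambda>s. F (r(j := s)) i) (r j)"

end

theory Submission
  imports Defs
begin

definition lin :: "int set \<Rightarrow> (int \<Rightarrow> real) \<Rightarrow> (int \<Rightarrow> real) \<Rightarrow> real" where
  "lin J a r = (\<Sum>j\<in>J. a j * r j)"

definition TT :: "(real \<Rightarrow> real) \<Rightarrow> int set \<Rightarrow> (real \<times> (int \<Rightarrow> real)) list \<Rightarrow> (int \<Rightarrow> real) \<Rightarrow> real" where
  "TT \<eta> J ts r = (\<Sum>x\<leftarrow>ts. fst x * \<eta> (lin J (snd x) r))"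

definition goodts :: "int set \<Rightarrow> (real \<times> (int \<Rightarrow> real)) list \<Rightarrow> bool" where
  "goodts J ts \<longleftrightarrow> (\<forall>x\<in>set ts. (\<forall>j. 0 \<le> snd x j) \<and> (\<exists>j\<in>J. 0 < snd x j))"

lemma lin_affine: "lin J a (\<lambda>j. q j + u * w j) = lin J a q + u * lin J a w"
  by (simp add: lin_def sum.distrib sum_distrib_left algebra_simps)

lemma lin_pos:
  assumes "finite J" "goodts J ts" "x \<in> set ts" "\<forall>j\<in>J. r j > 0"
  shows "lin J (snd x) r > 0"
proof -
  from assms(2,3) obtain j where j: "j \<in> J" "0 < snd x j" "\<forall>j. 0 \<le> snd x j"
    unfolding goodts_def by blast
  show ?thesis unfolding lin_def
    by (rule sum_pos2[OF assms(1) j(1)]) (use j assms(4) in auto)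
qed

lemma TT_line_deriv:
  assumes "finite J" "goodts J ts" "\<forall>x>0. \<eta> differentiable (at x)"
    "\<forall>j\<in>J. q j + u * w j > 0"
  shows "((\<lambda>u. TT \<eta> J ts (\<lambda>j. q j + u * w j)) has_real_derivative
     (\<Sum>x\<leftarrow>ts. fst x * deriv \<eta> (lin J (snd x) (\<lambda>j. q j + u * w j)) * lin J (snd x) w)) (at u)"
  using assms(2)
proof (induction ts)
  case Nil
  then show ?case by (simp add: TT_def)
next
  case (Cons x ts)
  have g: "goodts J ts" using Cons.prems by (simp add: goodts_def)
  have pos: "lin J (snd x) (\<lambda>j. q j + u * w j) > 0"
    by (rule lin_pos[OF assms(1) Cons.prems]) (use assms(4) in auto)
  have d\<eta>: "(\<eta> has_real_derivative deriv \<eta> (lin J (snd x) q + u * lin J (snd x) w)) (at (lin J (snd x) q + u * lin J (snd x) w))"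
    using assms(3) pos by (simp add: lin_affine DERIV_deriv_iff_real_differentiable)
  have dl: "((\<lambda>u. lin J (snd x) q + u * lin J (snd x) w) has_real_derivative lin J (snd x) w) (at u)"
    by (auto intro!: derivative_eq_intros)
  have d1: "((\<lambda>u. fst x * \<eta> (lin J (snd x) (\<lambda>j. q j + u * w j))) has_real_derivative
      fst x * (deriv \<eta> (lin J (snd x) (\<lambda>j. q j + u * w j)) * lin J (snd x) w)) (at u)"
    unfolding lin_affine
    by (rule DERIV_cmult) (rule DERIV_chain2[OF d\<eta> dl])
  have "((\<lambda>u. fst x * \<eta> (lin J (snd x) (\<lambda>j. q j + u * w j)) + TT \<eta> J ts (\<lambda>j. q j + u * w j)) has_real_derivative
      fst x * (deriv \<eta> (lin J (snd x) (\<lambda>j. q j + u * w j)) * lin J (snd x) w) +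
      (\<Sum>x\<leftarrow>ts. fst x * deriv \<eta> (lin J (snd x) (\<lambda>j. q j + u * w j)) * lin J (snd x) w)) (at u)"
    by (rule DERIV_add[OF d1 Cons.IH[OF g]])
  then show ?case by (simp add: TT_def mult.assoc)
qed

lemma sum_list_swap:
  fixes w :: "int \<Rightarrow> real"
  shows "(\<Sum>j\<in>J. (\<Sum>x\<leftarrow>ts. g x * h x j) * w j) = (\<Sum>x\<leftarrow>ts. g x * (\<Sum>j\<in>J. h x j * w j))"
  by (induction ts) (simp_all add: distrib_right sum.distrib sum_distrib_left mult.assoc)

lemma TT_pD:
  assumes "finite J" "goodts J ts" "\<forall>x>0. \<eta> differentiable (at x)" "j \<in> J"
    "\<forall>i\<in>J. z i > 0"
  shows "((\<lambda>s. TT \<eta> J ts (z(j:=s))) has_real_derivative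
     (\<Sum>x\<leftarrow>ts. fst x * deriv \<eta> (lin J (snd x) z) * snd x j)) (at (z j))"
proof -
  define w where "w = (\<lambda>i. if i = j then 1 else (0::real))"
  have lw: "lin J a w = a j" for a using assms(1,4)
    by (simp add: lin_def w_def if_distrib cong: if_cong)
  have d: "((\<lambda>u. TT \<eta> J ts (\<lambda>i. z i + u * w i)) has_real_derivative
     (\<Sum>x\<leftarrow>ts. fst x * deriv \<eta> (lin J (snd x) (\<lambda>i. z i + 0 * w i)) * lin J (snd x) w)) (at 0)"
    by (rule TT_line_deriv[OF assms(1-3)]) (use assms(5) in simp)
  have ds: "((\<lambda>s. s - z j) has_real_derivative 1) (at (z j))"
    by (auto intro!: derivative_eq_intros)
  have "((\<lambda>s. TT \<eta> J ts (\<lambda>i. z i + (s - z j) * w i)) has_real_derivative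
     (\<Sum>x\<leftarrow>ts. fst x * deriv \<eta> (lin J (snd x) (\<lambda>i. z i + 0 * w i)) * lin J (snd x) w) * 1) (at (z j))"
    using DERIV_chain2[OF _ ds, of "\<lambda>u. TT \<eta> J ts (\<lambda>i. z i + u * w i)"] d by simp
  moreover have "(\<lambda>i. z i + (s - z j) * w i) = z(j:=s)" for s
    by (auto simp: w_def)
  ultimately show ?thesis by (simp add: lw)
qed

definition ind :: "int \<Rightarrow> int \<Rightarrow> real" where
  "ind k j = (if j = k then 1 else 0)"

definition tsF :: "int \<Rightarrow> int \<Rightarrow> (real \<times> (int \<Rightarrow> real)) list" where
  "tsF K i = (if -K + 1 \<le> i \<and> i \<le> K - 1 then
     [(1, ind i), (1, \<lambda>j. ind i j + ind (i-1) j), (1, \<lambda>j. ind i j + ind (i+1) j),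
      (2, \<lambda>j. 2 * ind K j), (-1, \<lambda>j. ind K j + ind (K-1) j), (-1, \<lambda>j. ind K j + ind (K+1) j)]
   else [(1, ind i), (2, \<lambda>j. 2 * ind i j)])"

lemma lin_ind: "finite J \<Longrightarrow> k \<in> J \<Longrightarrow> lin J (ind k) r = r k"
proof -
  assume "finite J" "k \<in> J"
  have "(\<Sum>j\<in>J. ind k j * r j) = (\<Sum>j\<in>J. if j = k then r j else 0)"
    by (rule sum.cong) (auto simp: ind_def)
  then show ?thesis using \<open>finite J\<close> \<open>k \<in> J\<close> by (simp add: lin_def)
qed

lemma lin_ind2: "finite J \<Longrightarrow> k \<in> J \<Longrightarrow> l \<in> J \<Longrightarrow> lin J (\<lambda>j. ind k j + ind l j) r = r k + r l"
  using lin_ind[of J k r] lin_ind[of J l r] by (simp add: lin_def distrib_right sum.distrib)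

lemma lin_ind3: "finite J \<Longrightarrow> k \<in> J \<Longrightarrow> lin J (\<lambda>j. 2 * ind k j) r = 2 * r k"
  using lin_ind[of J k r] by (simp add: lin_def sum_distrib_left[symmetric] mult.assoc)

lemma tsF_good:
  assumes "0 < K" "K < N - 1" "i \<in> idx N"
  shows "goodts (idx N) (tsF K i)"
proof -
  have K: "K \<in> idx N" using assms by (simp add: idx_def)
  have "\<forall>x\<in>set (tsF K i). (\<forall>j. 0 \<le> snd x j) \<and> (0 < snd x i \<or> 0 < snd x K)"
    by (auto simp: tsF_def ind_def)
  then show ?thesis using assms(3) K unfolding goodts_def by blast
qed

lemma PsiF_TT:
  assumes "0 < K" "K < N - 1" "i \<in> idx N"
  shows "PsiF \<eta> K r i = TT \<eta> (idx N) (tsF K i) r"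
proof (cases "-K + 1 \<le> i \<and> i \<le> K - 1")
  case True
  have m: "i \<in> idx N" "i - 1 \<in> idx N" "i + 1 \<in> idx N" "K \<in> idx N" "K - 1 \<in> idx N" "K + 1 \<in> idx N"
    using assms True by (auto simp: idx_def)
  have f: "finite (idx N)" by (simp add: idx_def)
  show ?thesis unfolding PsiF_def tsF_def if_P[OF True] using m f
    by (simp add: TT_def lin_ind lin_ind2 lin_ind3)
next
  case False
  have f: "finite (idx N)" by (simp add: idx_def)
  have "i \<in> idx N" using assms by simp
  then show ?thesis unfolding PsiF_def tsF_def if_not_P[OF False] using f
    by (simp add: TT_def lin_ind lin_ind3)
qed

lemma PsiF_line:
  assumes "0 < K" "K < N - 1" "i \<in> idx N" "\<forall>x>0. \<eta> differentiable (at x)"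
    "\<forall>j\<in>idx N. q j + u * w j > 0"
  shows "((\<lambda>u. PsiF \<eta> K (\<lambda>j. q j + u * w j) i) has_real_derivative
     (\<Sum>j\<in>idx N. pD (PsiF \<eta> K) (\<lambda>j. q j + u * w j) i j * w j)) (at u)"
proof -
  define z where "z = (\<lambda>j. q j + u * w j)"
  have f: "finite (idx N)" by (simp add: idx_def)
  have g: "goodts (idx N) (tsF K i)" by (rule tsF_good[OF assms(1-3)])
  have zpos: "\<forall>j\<in>idx N. z j > 0" using assms(5) by (simp add: z_def)
  have pd: "pD (PsiF \<eta> K) z i j = (\<Sum>x\<leftarrow>tsF K i. fst x * deriv \<eta> (lin (idx N) (snd x) z) * snd x j)"
    if "j \<in> idx N" for j
    unfolding pD_def PsiF_TT[OF assms(1-3)]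
    by (rule DERIV_imp_deriv[OF TT_pD[OF f g assms(4) that zpos]])
  have "(\<Sum>j\<in>idx N. pD (PsiF \<eta> K) z i j * w j) =
        (\<Sum>j\<in>idx N. (\<Sum>x\<leftarrow>tsF K i. (fst x * deriv \<eta> (lin (idx N) (snd x) z)) * snd x j) * w j)"
    by (rule sum.cong) (simp_all add: pd)
  also have "\<dots> = (\<Sum>x\<leftarrow>tsF K i. (fst x * deriv \<eta> (lin (idx N) (snd x) z)) * (\<Sum>j\<in>idx N. snd x j * w j))"
    by (rule sum_list_swap)
  also have "\<dots> = (\<Sum>x\<leftarrow>tsF K i. fst x * deriv \<eta> (lin (idx N) (snd x) z) * lin (idx N) (snd x) w)"
    by (simp add: lin_def)
  finally have e: "(\<Sum>j\<in>idx N. pD (PsiF \<eta> K) z i j * w j) = \<dots>" .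
  show ?thesis
    unfolding PsiF_TT[OF assms(1-3)] z_def[symmetric] e
    using TT_line_deriv[OF f g assms(4) assms(5)] by (simp add: z_def)
qed

lemma dd_sign:
  fixes D w :: "int \<Rightarrow> real"
  assumes "finite J" "i \<in> J" "D i > (\<Sum>j\<in>J-{i}. \<bar>D j\<bar>)" "\<sigma> = 1 \<or> \<sigma> = -1"
    "\<forall>j\<in>J. \<bar>w j\<bar> \<le> \<sigma> * w i" "\<sigma> * w i > 0"
  shows "\<sigma> * (\<Sum>j\<in>J. D j * w j) > 0"
proof -
  define c where "c = \<sigma> * w i"
  have ab: "\<bar>\<sigma>\<bar> = 1" using assms(4) by auto
  have each: "\<sigma> * (D j * w j) \<ge> - (\<bar>D j\<bar> * c)" if "j \<in> J" for j
  proof -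
    have "\<bar>\<sigma> * (D j * w j)\<bar> = \<bar>D j\<bar> * \<bar>w j\<bar>" by (simp add: abs_mult ab)
    also have "\<dots> \<le> \<bar>D j\<bar> * c" using assms(5) that c_def by (simp add: mult_left_mono)
    finally show ?thesis by linarith
  qed
  have "(\<Sum>j\<in>J-{i}. \<sigma> * (D j * w j)) \<ge> (\<Sum>j\<in>J-{i}. - (\<bar>D j\<bar> * c))"
    by (rule sum_mono) (use each in auto)
  also have "(\<Sum>j\<in>J-{i}. - (\<bar>D j\<bar> * c)) = - ((\<Sum>j\<in>J-{i}. \<bar>D j\<bar>) * c)"
    by (simp add: sum_negf sum_distrib_right)
  finally have r: "(\<Sum>j\<in>J-{i}. \<sigma> * (D j * w j)) \<ge> - ((\<Sum>j\<in>J-{i}. \<bar>D j\<bar>) * c)" .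
  have "\<sigma> * (\<Sum>j\<in>J. D j * w j) = D i * c + (\<Sum>j\<in>J-{i}. \<sigma> * (D j * w j))"
    using assms(1,2) by (simp add: sum.remove sum_distrib_left c_def algebra_simps)
  moreover have "(D i - (\<Sum>j\<in>J-{i}. \<bar>D j\<bar>)) * c > 0"
    using assms(3,6) c_def by simp
  ultimately show ?thesis using r by (simp add: algebra_simps)
qed

lemma lin_cont: "continuous_on B (lin J a)"
  unfolding lin_def
  by (intro continuous_intros continuous_on_subset[OF continuous_on_product_coordinates]) auto

lemma TT_cont:
  assumes "finite J" "goodts J ts" "continuous_on {0<..} \<eta>" "\<forall>r\<in>B. \<forall>j\<in>J. r j > 0"
  shows "continuous_on B (TT \<eta> J ts)"
  using assms(2)
proof (induction ts)
  case Nil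
  then show ?case by (simp add: TT_def)
next
  case (Cons x ts)
  have g: "goodts J ts" using Cons.prems by (simp add: goodts_def)
  have sub: "lin J (snd x) ` B \<subseteq> {0<..}"
  proof
    fix y assume "y \<in> lin J (snd x) ` B"
    then obtain r where "r \<in> B" "y = lin J (snd x) r" by blast
    then show "y \<in> {0<..}" using lin_pos[OF assms(1) Cons.prems, of x r] assms(4) by auto
  qed
  have c1: "continuous_on B (\<lambda>r. \<eta> (lin J (snd x) r))"
    by (rule continuous_on_compose2[OF assms(3) lin_cont sub])
  have "continuous_on B (\<lambda>r. fst x * \<eta> (lin J (snd x) r) + TT \<eta> J ts r)"
    by (intro continuous_on_add continuous_on_mult continuous_on_const c1 Cons.IH[OF g])
  moreover have "TT \<eta> J (x # ts) = (\<lambda>r. fst x * \<eta> (lin J (snd x) r) + TT \<eta> J ts r)"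
    by (auto simp: TT_def)
  ultimately show ?case by simp
qed

lemma Max_cont:
  fixes f :: "'i \<Rightarrow> 'a::topological_space \<Rightarrow> real"
  assumes "finite I" "I \<noteq> {}" "\<forall>i\<in>I. continuous_on B (f i)"
  shows "continuous_on B (\<lambda>r. Max ((\<lambda>i. f i r) ` I))"
  using assms
proof (induction I rule: finite_ne_induct)
  case (singleton x)
  then show ?case by simp
next
  case (insert x F)
  have "continuous_on B (\<lambda>r. max (f x r) (Max ((\<lambda>i. f i r) ` F)))"
    using insert by (intro continuous_on_max) auto
  then show ?case using insert by simp
qed

lemma between_lemma:
  fixes a b x v s u :: real
  assumes "a \<le> x" "x \<le> b" "a < x + s * v" "x + s * v < b" "0 < u" "u \<le> s"
  shows "a < x + u * v \<and> x + u * v < b"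
proof (cases "v \<ge> 0")
  case True
  have "u * v \<le> s * v" using True assms by (simp add: mult_right_mono)
  moreover have "a < x + u * v"
  proof (cases "v = 0")
    case True then show ?thesis using assms by simp
  next
    case False then have "u * v > 0" using \<open>v \<ge> 0\<close> assms by simp
    then show ?thesis using assms by linarith
  qed
  ultimately show ?thesis using assms by linarith
next
  case False
  have "u * v \<ge> s * v" using False assms by (simp add: mult_right_mono_neg)
  moreover have "u * v < 0" using False assms by (simp add: mult_pos_neg)
  ultimately show ?thesis using assms by linarith
qed

lemma conv_lemma:
  fixes a b p q u :: real
  assumes "a < p" "p < b" "a < q" "q < b" "0 \<le> u" "u \<le> 1"
  shows "a < p + u * (q - p) \<and> p + u * (q - p) < b"
proof -
  have e: "p + u * (q - p) = (1 - u) * p + u * q" by (simp add: algebra_simps)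
  have "(1 - u) * p + u * q < b" by (rule convex_bound_lt) (use assms in auto)
  moreover have "(1 - u) * (-p) + u * (-q) < -a" by (rule convex_bound_lt) (use assms in auto)
  ultimately show ?thesis unfolding e by (simp add: algebra_simps)
qed

theorem lemma4p3:
  fixes \<phi> :: "real \<Rightarrow> real" and a0 a1 r1 r2 rL rU :: real and N K :: int
    and \<Phi> :: "int \<Rightarrow> real"
  assumes phi_C3: "C3_pos \<phi>"
    and cst: "0 < a0" "a0 < r1" "r1 < r2" "r2 < 2 * a0" "a1 > a0"
    and eta1: "\<forall>r. 0 < r \<and> r < r1 \<longrightarrow> deriv (deriv \<phi>) r > 0" "\<forall>r. r > r1 \<longrightarrow> deriv (deriv \<phi>) r < 0"
    and eta2: "\<forall>r. 0 < r \<and> r < r2 \<longrightarrow> deriv (deriv (deriv \<phi>)) r < 0"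
              "\<forall>r. r > r2 \<longrightarrow> deriv (deriv (deriv \<phi>)) r > 0"
    and etah: "\<forall>r. 0 < r \<and> r < a0 \<longrightarrow> eta_hat (deriv \<phi>) r < 0" "\<forall>r. r > a0 \<longrightarrow> eta_hat (deriv \<phi>) r > 0"
    and etah1: "\<forall>r. 0 < r \<and> r < a1 \<longrightarrow> deriv (eta_hat (deriv \<phi>)) r > 0"
               "\<forall>r. r > a1 \<longrightarrow> deriv (eta_hat (deriv \<phi>)) r < 0"
    and NK: "0 < K" "K < N - 1"
    and rLU: "0 < rL" "rL < rU" "rU < a1"
    and bdry: "\<forall>i\<in>idx N. \<forall>t\<in>{0..1}. \<forall>r\<in>Omega_bdry N rL rU.
                 (r i = rU \<longrightarrow> hom (deriv \<phi>) K \<Phi> r t i > 0) \<and> (r i = rL \<longrightarrow> hom (deriv \<phi>) K \<Phi> r t i < 0)"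
    and dd: "\<forall>r\<in>Omega N rL rU. \<forall>i\<in>idx N.
               pD (PsiF (deriv \<phi>) K) r i i > (\<Sum>j\<in>idx N - {i}. \<bar>pD (PsiF (deriv \<phi>) K) r i j\<bar>)"
  shows "\<exists>!r. r \<in> Omega N rL rU \<and> (\<forall>j\<in>idx N. PsiF (deriv \<phi>) K r j = \<Phi> j)"
proof -
  let ?\<Omega> = "Omega N rL rU"
  let ?F = "PsiF (deriv \<phi>) K"
  have fJ: "finite (idx N)" by (simp add: idx_def)
  have KJ: "K \<in> idx N" using NK by (simp add: idx_def)
  have diff: "\<forall>x>0. deriv \<phi> differentiable (at x)"
  proof -
    have "(1::nat) < 3" by simp
    with phi_C3 have "\<forall>x>0. ((deriv ^^ 1) \<phi>) differentiable (at x)" unfolding C3_pos_def by blast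
    then show ?thesis by simp
  qed
  have cont\<eta>: "continuous_on {0<..} (deriv \<phi>)"
    by (rule continuous_at_imp_continuous_on) (use diff in \<open>auto intro: differentiable_imp_continuous_within\<close>)
  have OmI: "r \<in> ?\<Omega> \<longleftrightarrow> (\<forall>j\<in>idx N. rL < r j \<and> r j < rU) \<and> (\<forall>j. j \<notin> idx N \<longrightarrow> r j = 0)" for r
    by (simp add: Omega_def)
  have lineD: "((\<lambda>u. ?F (\<lambda>j. q j + u * w j) i - \<Phi> i) has_real_derivative
        (\<Sum>j\<in>idx N. pD ?F (\<lambda>j. q j + u * w j) i j * w j)) (at u)"
    if "i \<in> idx N" "\<forall>j\<in>idx N. q j + u * w j > 0" for q w u i
  proof -
    have "((\<lambda>u. ?F (\<lambda>j. q j + u * w j) i) has_real_derivative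
        (\<Sum>j\<in>idx N. pD ?F (\<lambda>j. q j + u * w j) i j * w j)) (at u)"
      by (rule PsiF_line[OF NK that(1) diff that(2)])
    from DERIV_diff[OF this DERIV_const] show ?thesis by simp
  qed
  have key: "\<exists>D. ((\<lambda>u. ?F (\<lambda>j. q j + u * w j) i - \<Phi> i) has_real_derivative D) (at u) \<and> \<sigma> * D > 0"
    if i: "i \<in> idx N" and z: "(\<lambda>j. q j + u * w j) \<in> ?\<Omega>" and s: "\<sigma> = 1 \<or> \<sigma> = -1"
      and w1: "\<forall>j\<in>idx N. \<bar>w j\<bar> \<le> \<sigma> * w i" and w2: "\<sigma> * w i > 0" for q w u i \<sigma>
  proof -
    have pos: "\<forall>j\<in>idx N. q j + u * w j > 0" using z rLU(1) unfolding OmI by force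
    have ddz: "pD ?F (\<lambda>j. q j + u * w j) i i > (\<Sum>j\<in>idx N - {i}. \<bar>pD ?F (\<lambda>j. q j + u * w j) i j\<bar>)"
      using dd z i by blast
    have "\<sigma> * (\<Sum>j\<in>idx N. pD ?F (\<lambda>j. q j + u * w j) i j * w j) > 0"
      by (rule dd_sign[where D="\<lambda>j. pD ?F (\<lambda>j. q j + u * w j) i j", OF fJ i ddz s w1 w2])
    then show ?thesis using lineD[OF i pos] by blast
  qed
  have uniq: "x = y" if x: "x \<in> ?\<Omega>" "\<forall>j\<in>idx N. ?F x j = \<Phi> j"
    and y: "y \<in> ?\<Omega>" "\<forall>j\<in>idx N. ?F y j = \<Phi> j" for x y
  proof (rule ccontr)
    assume ne: "x \<noteq> y"
    define w where "w = (\<lambda>j. y j - x j)"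
    have "\<exists>j\<in>idx N. w j \<noteq> 0"
    proof (rule ccontr)
      assume "\<not> ?thesis"
      then have "x j = y j" for j using x(1) y(1) unfolding OmI w_def by (cases "j \<in> idx N") auto
      then show False using ne by auto
    qed
    then obtain j0 where j0: "j0 \<in> idx N" "w j0 \<noteq> 0" by blast
    define M where "M = Max ((\<lambda>j. \<bar>w j\<bar>) ` idx N)"
    have "M \<in> (\<lambda>j. \<bar>w j\<bar>) ` idx N" using fJ j0 unfolding M_def by (intro Max_in) auto
    then obtain k where k: "k \<in> idx N" "M = \<bar>w k\<bar>" by blast
    have kmax: "\<forall>j\<in>idx N. \<bar>w j\<bar> \<le> \<bar>w k\<bar>" using fJ k(2) unfolding M_def by (metis Max_ge finite_imageI imageI)
    have wk: "w k \<noteq> 0" using kmax j0 by force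
    define \<sigma> where "\<sigma> = (if w k > 0 then 1 else -1::real)"
    have \<sigma>: "\<sigma> = 1 \<or> \<sigma> = -1" by (simp add: \<sigma>_def)
    have \<sigma>w: "\<sigma> * w k = \<bar>w k\<bar>" using wk by (auto simp: \<sigma>_def)
    define E where "E = (\<lambda>u. ?F (\<lambda>j. x j + u * w j) k - \<Phi> k)"
    have inO: "(\<lambda>j. x j + u * w j) \<in> ?\<Omega>" if "0 \<le> u" "u \<le> 1" for u
      unfolding OmI
    proof (intro conjI ballI allI impI)
      fix j assume j: "j \<in> idx N"
      show "rL < x j + u * w j" "x j + u * w j < rU"
        using conv_lemma[of rL "x j" rU "y j" u] x(1) y(1) j that unfolding OmI w_def by auto
    next
      fix j assume "j \<notin> idx N" then show "x j + u * w j = 0" using x(1) y(1) unfolding OmI w_def by auto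
    qed
    have dE: "\<exists>D. (E has_real_derivative D) (at u) \<and> \<sigma> * D > 0" if "0 \<le> u" "u \<le> 1" for u
      unfolding E_def by (rule key[OF k(1) inO[OF that] \<sigma>]) (use kmax \<sigma>w wk in auto)
    have cont: "continuous_on {0..1} E"
      by (rule continuous_at_imp_continuous_on) (use dE DERIV_isCont in force)
    have dif: "E differentiable (at u)" if "0 < u" "u < 1" for u
      using dE[of u] that real_differentiable_def by force
    obtain l z where lz: "0 < z" "z < 1" "DERIV E z :> l" "E 1 - E 0 = (1 - 0) * l"
      using MVT[OF zero_less_one cont dif] by blast
    obtain D where D: "DERIV E z :> D" "\<sigma> * D > 0" using dE[of z] lz by auto
    have lD: "l = D" using DERIV_unique[OF lz(3) D(1)] .
    have "(\<lambda>j. x j + 1 * w j) = y" by (auto simp: w_def)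
    then have E1: "E 1 = 0" using y(2) k(1) by (simp add: E_def)
    have "(\<lambda>j. x j + 0 * w j) = x" by auto
    then have E0: "E 0 = 0" using x(2) k(1) by (simp add: E_def)
    show False using lz(4) E1 E0 lD D(2) by simp
  qed
  define S where "S = (\<lambda>j. if j \<in> idx N then {rL..rU} else {0::real})"
  define B where "B = PiE UNIV S"
  have memB: "r \<in> B \<longleftrightarrow> (\<forall>j\<in>idx N. rL \<le> r j \<and> r j \<le> rU) \<and> (\<forall>j. j \<notin> idx N \<longrightarrow> r j = 0)" for r
    by (auto simp: B_def S_def PiE_UNIV_domain Pi_iff split: if_splits)
  have cB: "compact B"
  proof -
    have "compactin (product_topology (\<lambda>_. euclidean) UNIV) B"
      unfolding B_def compactin_PiE by (auto simp: S_def)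
    then show ?thesis by (simp add: euclidean_product_topology)
  qed
  have Bne: "B \<noteq> {}"
  proof -
    have "(\<lambda>j. if j \<in> idx N then rL else 0) \<in> B" using rLU unfolding memB by auto
    then show ?thesis by blast
  qed
  have Bpos: "\<forall>r\<in>B. \<forall>j\<in>idx N. r j > 0"
  proof (intro ballI)
    fix r j assume "r \<in> B" "j \<in> idx N"
    then show "r j > 0" using rLU(1) unfolding memB by force
  qed
  define e where "e = (\<lambda>i r. ?F r i - \<Phi> i)"
  define mm where "mm = (\<lambda>r. Max ((\<lambda>i. \<bar>e i r\<bar>) ` idx N))"
  have econt: "continuous_on B (e i)" if i: "i \<in> idx N" for i
  proof -
    have "e i = (\<lambda>r. TT (deriv \<phi>) (idx N) (tsF K i) r - \<Phi> i)"
      using PsiF_TT[OF NK i] unfolding e_def by auto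
    moreover have "continuous_on B (TT (deriv \<phi>) (idx N) (tsF K i))"
      by (rule TT_cont[OF fJ tsF_good[OF NK i] cont\<eta> Bpos])
    ultimately show ?thesis by (auto intro: continuous_on_diff continuous_on_const)
  qed
  have mmcont: "continuous_on B mm"
    unfolding mm_def
    by (rule Max_cont[where I="idx N" and f="\<lambda>i r. \<bar>e i r\<bar>", OF fJ]) (use econt KJ in \<open>auto intro: continuous_on_rabs\<close>)
  obtain r0 where r0: "r0 \<in> B" "\<forall>r\<in>B. mm r0 \<le> mm r"
    using continuous_attains_inf[OF cB Bne mmcont] by blast
  have mmge: "\<bar>e i r\<bar> \<le> mm r" if "i \<in> idx N" for i r
    using fJ that unfolding mm_def by (auto intro: Max_ge)
  have bdryU: "e j r > 0" if "r \<in> B" "j \<in> idx N" "r j = rU" for r j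
  proof -
    have "r \<in> Omega_bdry N rL rU" using that unfolding memB Omega_bdry_def by auto
    then have "hom (deriv \<phi>) K \<Phi> r 1 j > 0" using bdry that by auto
    then show ?thesis by (simp add: hom_def e_def)
  qed
  have bdryL: "e j r < 0" if "r \<in> B" "j \<in> idx N" "r j = rL" for r j
  proof -
    have "r \<in> Omega_bdry N rL rU" using that unfolding memB Omega_bdry_def by auto
    then have "hom (deriv \<phi>) K \<Phi> r 1 j < 0" using bdry that by auto
    then show ?thesis by (simp add: hom_def e_def)
  qed
  have m0: "mm r0 = 0"
  proof (rule ccontr)
    assume "mm r0 \<noteq> 0"
    moreover have "mm r0 \<ge> 0" using mmge[OF KJ, of r0] by linarith
    ultimately have mpos: "mm r0 > 0" by simp
    define m where "m = mm r0"
    define v where "v = (\<lambda>j. if j \<in> idx N then - sgn (e j r0) else 0)"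
    define p where "p = (\<lambda>s j. r0 j + s * v j)"
    have vb: "\<bar>v j\<bar> \<le> 1" for j by (simp add: v_def sgn_if)
    have p0: "p 0 = r0" by (simp add: p_def)
    have evO: "eventually (\<lambda>s. p s \<in> ?\<Omega>) (at_right 0)"
    proof -
      have "eventually (\<lambda>s. rL < p s j \<and> p s j < rU) (at_right 0)" if j: "j \<in> idx N" for j
      proof -
        consider "rL < r0 j \<and> r0 j < rU" | "r0 j = rU" | "r0 j = rL" using r0(1) j unfolding memB by force
        then show ?thesis
        proof cases
          case 1
          have lim: "((\<lambda>s. p s j) \<longlongrightarrow> r0 j) (at_right 0)" unfolding p_def
            by (auto intro!: tendsto_eq_intros)
          show ?thesis using 1 eventually_conj[OF order_tendstoD(1)[OF lim] order_tendstoD(2)[OF lim]] by auto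
        next
          case 2
          have "e j r0 > 0" by (rule bdryU[OF r0(1) j 2])
          then have vj: "v j = -1" using j by (simp add: v_def)
          have "eventually (\<lambda>s. s \<in> {0<..<rU - rL}) (at_right 0)" using eventually_at_right_real rLU by simp
          then show ?thesis by eventually_elim (auto simp: p_def 2 vj)
        next
          case 3
          have "e j r0 < 0" by (rule bdryL[OF r0(1) j 3])
          then have vj: "v j = 1" using j by (simp add: v_def)
          have "eventually (\<lambda>s. s \<in> {0<..<rU - rL}) (at_right 0)" using eventually_at_right_real rLU by simp
          then show ?thesis by eventually_elim (auto simp: p_def 3 vj)
        qed
      qed
      then have "eventually (\<lambda>s. \<forall>j\<in>idx N. rL < p s j \<and> p s j < rU) (at_right 0)"
        using fJ by (simp add: eventually_ball_finite)
      then show ?thesis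
        by eventually_elim (use r0(1) in \<open>auto simp: OmI memB p_def v_def\<close>)
    qed
    have evi: "eventually (\<lambda>s. \<bar>e i (p s)\<bar> < m) (at_right 0)" if i: "i \<in> idx N" for i
    proof -
      have pdiff: "\<exists>D. ((\<lambda>u. e i (p u)) has_real_derivative D) (at u)" if u: "\<bar>u\<bar> < rL" for u
      proof -
        have "\<forall>j\<in>idx N. r0 j + u * v j > 0"
        proof
          fix j assume j: "j \<in> idx N"
          have "\<bar>u * v j\<bar> \<le> \<bar>u\<bar>" using vb[of j] by (simp add: abs_mult mult_left_le)
          then show "r0 j + u * v j > 0" using r0(1) j u unfolding memB by force
        qed
        from lineD[OF i this] show ?thesis unfolding e_def p_def by blast
      qed
      have lim: "((\<lambda>u. e i (p u)) \<longlongrightarrow> e i r0) (at_right 0)"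
      proof -
        have "isCont (\<lambda>u. e i (p u)) 0" using pdiff[of 0] rLU DERIV_isCont by auto
        then have "((\<lambda>u. e i (p u)) \<longlongrightarrow> e i r0) (at 0)" by (simp add: isCont_def p0)
        then show ?thesis by (rule tendsto_within_subset) simp
      qed
      have le: "\<bar>e i r0\<bar> \<le> m" using mmge[OF i] m_def by simp
      show ?thesis
      proof (cases "\<bar>e i r0\<bar> < m")
        case True
        have "((\<lambda>u. \<bar>e i (p u)\<bar>) \<longlongrightarrow> \<bar>e i r0\<bar>) (at_right 0)" by (rule tendsto_rabs[OF lim])
        then show ?thesis using True order_tendstoD(2) by blast
      next
        case False
        then have em: "\<bar>e i r0\<bar> = m" using le by simp
        define \<sigma> where "\<sigma> = (if e i r0 > 0 then 1 else -1::real)"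
        have eineq: "e i r0 \<noteq> 0" using em mpos m_def by auto
        have \<sigma>e: "\<sigma> * e i r0 = m" using em eineq \<sigma>_def by auto
        have \<sigma>: "-\<sigma> = 1 \<or> -\<sigma> = -1" by (simp add: \<sigma>_def)
        have vi: "v i = - \<sigma>" using i eineq by (auto simp: v_def \<sigma>_def sgn_if)
        have \<sigma>sq: "\<sigma> * \<sigma> = 1" by (simp add: \<sigma>_def)
        have ev1: "eventually (\<lambda>u. \<sigma> * e i (p u) > 0) (at_right 0)"
          using order_tendstoD(1)[OF tendsto_mult[OF tendsto_const lim, of \<sigma>]] \<sigma>e mpos m_def by auto
        show ?thesis using ev1 evO eventually_at_right_less[of "0::real"]
        proof eventually_elim
          case (elim s)
          have inO: "p u \<in> ?\<Omega>" if "0 < u" "u \<le> s" for u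
            unfolding OmI
          proof (intro conjI ballI allI impI)
            fix j assume j: "j \<in> idx N"
            have "rL < p s j" "p s j < rU" using elim(2) j unfolding OmI by auto
            then show "rL < p u j" "p u j < rU"
              using between_lemma[of rL "r0 j" rU s "v j" u] r0(1) j that unfolding memB p_def by auto
          next
            fix j assume "j \<notin> idx N" then show "p u j = 0" using r0(1) unfolding memB p_def v_def by auto
          qed
          have dd': "\<exists>D. ((\<lambda>u. e i (p u)) has_real_derivative D) (at u) \<and> -\<sigma> * D > 0"
            if "0 < u" "u \<le> s" for u
            unfolding e_def p_def
            by (rule key[OF i inO[OF that, unfolded p_def] \<sigma>]) (use vb vi \<sigma>sq in auto)
          have dall: "\<exists>D. ((\<lambda>u. e i (p u)) has_real_derivative D) (at u)" if "0 \<le> u" "u \<le> s" for u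
          proof (cases "u = 0")
            case True then show ?thesis using pdiff[of 0] rLU by simp
          next
            case False then show ?thesis using dd'[of u] that by auto
          qed
          have cont: "continuous_on {0..s} (\<lambda>u. e i (p u))"
            by (rule continuous_at_imp_continuous_on) (use dall DERIV_isCont in force)
          have dif: "(\<lambda>u. e i (p u)) differentiable (at u)" if "0 < u" "u < s" for u
            using dall[of u] that real_differentiable_def by force
          obtain l z where lz: "0 < z" "z < s" "DERIV (\<lambda>u. e i (p u)) z :> l"
              "e i (p s) - e i (p 0) = (s - 0) * l"
            using MVT[OF elim(3) cont dif] by blast
          obtain D where D: "DERIV (\<lambda>u. e i (p u)) z :> D" "-\<sigma> * D > 0" using dd'[of z] lz by auto
          have lD: "l = D" using DERIV_unique[OF lz(3) D(1)] .
          have "\<sigma> * l < 0" using D(2) lD by simp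
          then have "s * (\<sigma> * l) < 0" using elim(3) by (simp add: mult_pos_neg)
          then have "\<sigma> * e i (p s) < m" using lz(4) p0 \<sigma>e by (simp add: algebra_simps)
          moreover have "\<bar>e i (p s)\<bar> = \<sigma> * e i (p s)" using elim(1) by (auto simp: \<sigma>_def)
          ultimately show ?case by simp
        qed
      qed
    qed
    have "eventually (\<lambda>s. p s \<in> ?\<Omega> \<and> (\<forall>i\<in>idx N. \<bar>e i (p s)\<bar> < m)) (at_right 0)"
      using evO evi fJ by (simp add: eventually_ball_finite eventually_conj)
    then obtain s where s: "p s \<in> ?\<Omega>" "\<forall>i\<in>idx N. \<bar>e i (p s)\<bar> < m"
      using eventually_happens'[OF trivial_limit_at_right_real] by blast
    have "mm (p s) < m" using s(2) fJ KJ unfolding mm_def by (subst Max_less_iff) auto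
    moreover have "p s \<in> B" using s(1) unfolding OmI memB by auto
    ultimately show False using r0(2) m_def by fastforce
  qed
  have sol: "\<forall>i\<in>idx N. ?F r0 i = \<Phi> i"
  proof
    fix i assume "i \<in> idx N"
    from mmge[OF this, of r0] m0 show "?F r0 i = \<Phi> i" unfolding e_def by simp
  qed
  have r0O: "r0 \<in> ?\<Omega>"
    unfolding OmI
  proof (intro conjI ballI allI impI)
    fix j assume j: "j \<in> idx N"
    have "r0 j \<noteq> rU" using bdryU[OF r0(1) j] sol j unfolding e_def by force
    moreover have "r0 j \<noteq> rL" using bdryL[OF r0(1) j] sol j unfolding e_def by force
    ultimately show "rL < r0 j" "r0 j < rU" using r0(1) j unfolding memB by force+
  next
    fix j assume "j \<notin> idx N" then show "r0 j = 0" using r0(1) unfolding memB by auto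
  qed
  show ?thesis using r0O sol uniq by blast
qed

end
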